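(* Let $N\ge4$ and consider the cycle-graph ensemble ($z=2$) of spring networks on the circle described in the context. Then for every spring $i$ and every $\bar\ell\in(-1/2,1/2)$, $$\operatorname{Var}(\Delta l_i\mid\bar l_i=\bar\ell)=\frac{N-1}{N^2}\operatorname{Var}(\bar l)=\frac{N-1}{12N^2},$$ which is independent of $\bar\ell$; consequently the edge-averaged conditional variance $\operatorname{Var}(\Delta l\mid\bar l=\bar\ell)$ equals this constant and coincides with its expectation over $\bar\ell$.
   Context: Let the circle be $\mathbb R/\mathbb Z$. Node positions $x_1,\dots,x_N$ are i.i.d. uniform on $\mathbb R/\mathbb Z$, and for $k=1,\dots,N$ node $k$ is joined to node $k+1$ (indices mod $N$) by a spring; there are no other springs ($N$ springs, average degree $z=2$). A spring joining nodes $a<b$ is oriented from $a$ to $b$ and has initial signed length $\bar l_i\in[-1/2,1/2)$, the representative of $x_b-x_a$ mod $1$ in $[-1/2,1/2)$; each is uniform on $[-1/2,1/2)$, with variance $\operatorname{Var}(\bar l)=1/12$. The graph has a single cycle; its signed cycle matrix is a row vector $\mathbf C\in\{\pm1\}^{1\times N}$ (entry $+1$/$-1$ according as the spring's orientation agrees/disagrees with the cycle orientation), and the winding number is $g=\mathbf C\bar{\boldsymbol l}\in\mathbb Z$. The relaxed lengths are $\boldsymbol l^*=\mathbf C^T(\mathbf C\mathbf C^T)^{-1}\mathbf C\bar{\boldsymbol l}$ (minimizer of $\tfrac12\boldsymbol l^T\boldsymbol l$ subject to $\mathbf C\boldsymbol l=\mathbf C\bar{\boldsymbol l}$), and $\Delta\boldsymbol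 l=\boldsymbol l^*-\bar{\boldsymbol l}$. The edge-averaged conditional variance is $\operatorname{Var}(\Delta l\mid\bar l=\bar\ell):=\operatorname{Var}(\Delta l_I\mid \bar l_I=\bar\ell)$ with $I$ uniform on the springs and independent of everything else. *)

theory Defs
  imports "HOL-Probability.Probability"
begin

text \<open>Circle R/Z represented by [0,1). Nodes and springs are indexed 0..N-1
 (node k of the paper is node k-1 here). Spring k joins node k and node (k+1) mod N.\<close>

definition node_pos :: "nat \<Rightarrow> (nat \<Rightarrow> real) measure" where
  "node_pos N = PiM {..<N} (\<lambda>_. uniform_measure lborel {0..<1})"

definition rep_half :: "real \<Rightarrow> real" where
  "rep_half t = t - real_of_int \<lfloor>t + 1/2\<rfloor>"

definition spr_a :: "nat \<Rightarrow> nat \<Rightarrow> nat" where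
  "spr_a N k = min k (Suc k mod N)"

definition spr_b :: "nat \<Rightarrow> nat \<Rightarrow> nat" where
  "spr_b N k = max k (Suc k mod N)"

text \<open>initial signed length of spring k (oriented from a to b, a < b)\<close>
definition lbar :: "nat \<Rightarrow> nat \<Rightarrow> (nat \<Rightarrow> real) \<Rightarrow> real" where
  "lbar N k x = rep_half (x (spr_b N k) - x (spr_a N k))"

text \<open>signed cycle matrix (a row vector); the cycle is traversed 0 -> 1 -> ... -> N-1 -> 0,
 so spring k is traversed from node k to node (k+1) mod N\<close>
definition cyc :: "nat \<Rightarrow> nat \<Rightarrow> real" where
  "cyc N k = (if spr_a N k = k then 1 else -1)"

definition winding :: "nat \<Rightarrow> (nat \<Rightarrow> real) \<Rightarrow> real" where
  "winding N x = (\<Sum>j<N. cyc N j * lbar N j x)"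

text \<open>relaxed lengths l* = C^T (C C^T)^{-1} C lbar  (C C^T is 1x1)\<close>
definition lstar :: "nat \<Rightarrow> nat \<Rightarrow> (nat \<Rightarrow> real) \<Rightarrow> real" where
  "lstar N k x = cyc N k * (1 / (\<Sum>j<N. cyc N j * cyc N j)) * winding N x"

definition dl :: "nat \<Rightarrow> nat \<Rightarrow> (nat \<Rightarrow> real) \<Rightarrow> real" where
  "dl N k x = lstar N k x - lbar N k x"

definition cond_var :: "'a measure \<Rightarrow> 'a measure \<Rightarrow> ('a \<Rightarrow> real) \<Rightarrow> 'a \<Rightarrow> real" where
  "cond_var M F X = real_cond_exp M F (\<lambda>w. (X w - real_cond_exp M F X w)\<^sup>2)"

text \<open>probability space extended by an independent uniformly chosen spring I\<close>
definition edge_space :: "nat \<Rightarrow> ((nat \<Rightarrow> real) \<times> nat) measure" where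
  "edge_space N = node_pos N \<Otimes>\<^sub>M uniform_count_measure {..<N}"

end

theory Submission
  imports Defs
begin


lemma rep_half_ge: "-1/2 \<le> rep_half t"
proof -
  have "real_of_int \<lfloor>t + 1/2\<rfloor> \<le> t + 1/2" by (rule of_int_floor_le)
  thus ?thesis unfolding rep_half_def by linarith
qed
lemma rep_half_lt: "rep_half t < 1/2"
proof -
  have "t + 1/2 < real_of_int \<lfloor>t + 1/2\<rfloor> + 1" by (rule real_of_int_floor_add_one_gt)
  thus ?thesis unfolding rep_half_def by linarith
qed
lemma rep_half_id: "-1/2 \<le> t \<Longrightarrow> t < 1/2 \<Longrightarrow> rep_half t = t"
  unfolding rep_half_def by (simp add: floor_eq_iff)
lemma rep_half_periodic: "rep_half (t + of_int n) = rep_half t"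
proof -
  have "\<lfloor>t + of_int n + 1/2\<rfloor> = \<lfloor>(t + 1/2) + of_int n\<rfloor>" by (simp add: algebra_simps)
  also have "\<dots> = \<lfloor>t + 1/2\<rfloor> + n" by (rule floor_add_int[symmetric])
  finally show ?thesis unfolding rep_half_def by simp
qed
lemma rep_half_meas[measurable]: "rep_half \<in> borel_measurable borel"
  unfolding rep_half_def by measurable

lemma integrable_ind_bdd:
  fixes g :: "real \<Rightarrow> real"
  assumes [measurable]: "g \<in> borel_measurable borel" and b: "\<And>w. \<bar>g w\<bar> \<le> C"
  shows "integrable lborel (\<lambda>w. indicator {p..<q} w * g w)"
proof -
  have I: "integrable lborel (\<lambda>w. C * indicator {p..<q} w :: real)"
    by (intro integrable_mult_right integrable_real_indicator emeasure_bounded_finite) auto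
  have "AE x in lborel. norm (indicator {p..<q} x * g x) \<le> norm (C * indicator {p..<q} x :: real)"
  proof (intro always_eventually allI)
    fix x
    have "\<bar>g x\<bar> \<le> \<bar>C\<bar>" using b[of x] by linarith
    thus "norm (indicator {p..<q} x * g x) \<le> norm (C * indicator {p..<q} x :: real)"
      by (auto simp: indicator_def abs_mult)
  qed
  then show ?thesis by (intro Bochner_Integration.integrable_bound[OF I]) auto
qed

lemma periodic_int:
  fixes k :: "real \<Rightarrow> real"
  assumes km[measurable]: "k \<in> borel_measurable borel" and b: "\<And>w. \<bar>k w\<bar> \<le> C"
    and per: "\<And>w n. k (w + of_int n) = k w"
  shows "(\<integral>w. indicator {a..<a+1} w * k w \<partial>lborel) = (\<integral>w. indicator {-1/2..<1/2} w * k w \<partial>lborel)"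
proof -
  define n where "n = \<lfloor>a + 1/2\<rfloor>"
  have n1: "of_int n \<le> a + 1/2" unfolding n_def by (rule of_int_floor_le)
  have n2: "a + 1/2 < of_int n + 1" unfolding n_def by (rule real_of_int_floor_add_one_gt)
  have I: "\<And>p q. integrable lborel (\<lambda>w. indicator {p..<q} w * k w)"
    by (rule integrable_ind_bdd[OF km b])
  have split: "\<And>w. indicator {a..<a+1} w * k w = indicator {a..<of_int n+1/2} w * k w + indicator {of_int n+1/2..<a+1} w * k w"
    using n1 n2 by (auto simp: indicator_def)
  have "(\<integral>w. indicator {a..<a+1} w * k w \<partial>lborel) = (\<integral>w. indicator {a..<of_int n+1/2} w * k w \<partial>lborel) + (\<integral>w. indicator {of_int n+1/2..<a+1} w * k w \<partial>lborel)"
    by (simp only: split, rule Bochner_Integration.integral_add[OF I I])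
  also have "(\<integral>w. indicator {a..<of_int n+1/2} w * k w \<partial>lborel) = (\<integral>v. indicator {a-of_int n..<1/2} v * k v \<partial>lborel)"
  proof -
    have "(\<integral>w. indicator {a..<of_int n+1/2} w * k w \<partial>lborel) = (\<integral>v. indicator {a..<of_int n+1/2} (of_int n + 1 * v) * k (of_int n + 1 * v) \<partial>lborel)"
      using lborel_integral_real_affine[where c=1 and t="of_int n" and f="\<lambda>w. indicator {a..<of_int n+1/2} w * k w"] by simp
    also have "\<dots> = (\<integral>v. indicator {a-of_int n..<1/2} v * k v \<partial>lborel)"
    proof (rule Bochner_Integration.integral_cong[OF refl])
      fix v
      have "k (of_int n + 1 * v) = k v" using per[of v n] by (simp add: add.commute)
      thus "indicator {a..<of_int n+1/2} (of_int n + 1 * v) * k (of_int n + 1 * v) = indicator {a-of_int n..<1/2} v * k v"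
        by (auto simp: indicator_def)
    qed
    finally show ?thesis .
  qed
  also have "(\<integral>w. indicator {of_int n+1/2..<a+1} w * k w \<partial>lborel) = (\<integral>v. indicator {-1/2..<a-of_int n} v * k v \<partial>lborel)"
  proof -
    have "(\<integral>w. indicator {of_int n+1/2..<a+1} w * k w \<partial>lborel) = (\<integral>v. indicator {of_int n+1/2..<a+1} (of_int (n+1) + 1 * v) * k (of_int (n+1) + 1 * v) \<partial>lborel)"
      using lborel_integral_real_affine[where c=1 and t="of_int (n+1)" and f="\<lambda>w. indicator {of_int n+1/2..<a+1} w * k w"] by simp
    also have "\<dots> = (\<integral>v. indicator {-1/2..<a-of_int n} v * k v \<partial>lborel)"
    proof (rule Bochner_Integration.integral_cong[OF refl])
      fix v
      have "k (of_int (n+1) + 1 * v) = k v" using per[of v "n+1"] by (simp add: add.commute)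
      thus "indicator {of_int n+1/2..<a+1} (of_int (n+1) + 1 * v) * k (of_int (n+1) + 1 * v) = indicator {-1/2..<a-of_int n} v * k v"
        by (auto simp: indicator_def)
    qed
    finally show ?thesis .
  qed
  also have "(\<integral>v. indicator {a-of_int n..<1/2} v * k v \<partial>lborel) + (\<integral>v. indicator {-1/2..<a-of_int n} v * k v \<partial>lborel)
      = (\<integral>v. indicator {a-of_int n..<1/2} v * k v + indicator {-1/2..<a-of_int n} v * k v \<partial>lborel)"
    by (rule Bochner_Integration.integral_add[OF I I, symmetric])
  also have "\<dots> = (\<integral>w. indicator {-1/2..<1/2} w * k w \<partial>lborel)"
    using n1 n2 by (intro Bochner_Integration.integral_cong[OF refl]) (auto simp: indicator_def)
  finally show ?thesis .
qed

definition Ju :: "(real \<Rightarrow> real) \<Rightarrow> real" where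
  "Ju f = (\<integral>w. indicator {-1/2..<1/2} w * f w \<partial>lborel)"

abbreviation UU :: "real measure" where "UU \<equiv> uniform_measure lborel {0..<1::real}"

lemma UU_density: "UU = density lborel (\<lambda>x. ennreal (indicator {0..<1::real} x))"
  unfolding uniform_measure_def by (simp add: ennreal_indicator divide_ennreal_def)

lemma int_UU:
  fixes g :: "real \<Rightarrow> real"
  assumes [measurable]: "g \<in> borel_measurable borel"
  shows "(\<integral>u. g u \<partial>UU) = (\<integral>u. indicator {0..<1} u * g u \<partial>lborel)"
  unfolding UU_density by (subst integral_density) auto

lemma unif_shift:
  fixes f :: "real \<Rightarrow> real"
  assumes fm[measurable]: "f \<in> borel_measurable borel"
    and b: "\<And>t. -1/2 \<le> t \<Longrightarrow> t < 1/2 \<Longrightarrow> \<bar>f t\<bar> \<le> C"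
  shows "(\<integral>u. f (rep_half (u - c)) \<partial>UU) = Ju f" and "(\<integral>u. f (rep_half (c - u)) \<partial>UU) = Ju f"
proof -
  define k where "k = (\<lambda>w. f (rep_half w))"
  have km[measurable]: "k \<in> borel_measurable borel" unfolding k_def by measurable
  have kb: "\<And>w. \<bar>k w\<bar> \<le> C" unfolding k_def using b rep_half_ge rep_half_lt by blast
  have kp: "\<And>w n. k (w + of_int n) = k w" unfolding k_def by (simp add: rep_half_periodic)
  have I: "\<And>p q. integrable lborel (\<lambda>w. indicator {p..<q} w * k w)"
    by (rule integrable_ind_bdd[OF km kb])
  have J: "(\<integral>w. indicator {-1/2..<1/2} w * k w \<partial>lborel) = Ju f"
    unfolding Ju_def k_def by (intro Bochner_Integration.integral_cong[OF refl]) (auto simp: indicator_def rep_half_id)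
  have "(\<integral>u. f (rep_half (u - c)) \<partial>UU) = (\<integral>u. indicator {0..<1} u * k (u - c) \<partial>lborel)"
    unfolding k_def by (rule int_UU) measurable
  also have "\<dots> = (\<integral>v. indicator {0..<1} (c + 1 * v) * k ((c + 1 * v) - c) \<partial>lborel)"
    using lborel_integral_real_affine[where c=1 and t="c" and f="\<lambda>u. indicator {0..<1} u * k (u - c)"] by simp
  also have "\<dots> = (\<integral>v. indicator {-c..<-c+1} v * k v \<partial>lborel)"
    by (intro Bochner_Integration.integral_cong[OF refl]) (auto simp: indicator_def)
  also have "\<dots> = Ju f" using periodic_int[OF km kb kp, of "-c"] J by simp
  finally show "(\<integral>u. f (rep_half (u - c)) \<partial>UU) = Ju f" .
  have "(\<integral>u. f (rep_half (c - u)) \<partial>UU) = (\<integral>u. indicator {0..<1} u * k (c - u) \<partial>lborel)"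
    unfolding k_def by (rule int_UU) measurable
  also have "\<dots> = \<bar>-1\<bar> *\<^sub>R (\<integral>v. indicator {0..<1} (c + -1 * v) * k (c - (c + -1 * v)) \<partial>lborel)"
    by (rule lborel_integral_real_affine[where c="-1" and t="c" and f="\<lambda>u. indicator {0..<1} u * k (c - u)"]) simp
  also have "\<dots> = (\<integral>v. indicator {c-1..<c-1+1} v * k v \<partial>lborel)"
  proof -
    have "AE v in lborel. indicator {0..<1} (c + -1 * v) * k (c - (c + -1 * v)) = indicator {c-1..<c-1+1} v * k v"
      using AE_lborel_singleton[of c] AE_lborel_singleton[of "c-1"]
      by eventually_elim (auto simp: indicator_def)
    thus ?thesis by (simp add: integral_cong_AE)
  qed
  also have "\<dots> = Ju f" using periodic_int[OF km kb kp, of "c-1"] J by simp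
  finally show "(\<integral>u. f (rep_half (c - u)) \<partial>UU) = Ju f" .
qed



lemma prob_UU: "prob_space UU"
  by (rule prob_space_uniform_measure) auto

lemma prob_M: "prob_space (node_pos N)"
  unfolding node_pos_def by (rule prob_space_PiM) (rule prob_UU)

lemma sigfin_UU: "product_sigma_finite (\<lambda>_::nat. UU)"
  unfolding product_sigma_finite_def
  using prob_UU prob_space_imp_sigma_finite by blast

lemma suc_mod_inj: "k < N \<Longrightarrow> e < N \<Longrightarrow> Suc k mod N = Suc e mod N \<Longrightarrow> k = e"
  by (metis Suc_inject Suc_lessI mod_Suc mod_less mod_self nat.distinct(1))

lemma spr_lt: "k < N \<Longrightarrow> spr_a N k < N" "k < N \<Longrightarrow> spr_b N k < N"
  unfolding spr_a_def spr_b_def by (auto simp: min_def max_def)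

lemma spr_in: "spr_a N k \<in> {k, Suc k mod N}" "spr_b N k \<in> {k, Suc k mod N}"
  unfolding spr_a_def spr_b_def by (auto simp: min_def max_def)

lemma lbar_meas[measurable]: "k < N \<Longrightarrow> lbar N k \<in> borel_measurable (node_pos N)"
proof -
  assume k: "k < N"
  have a: "(\<lambda>x. x (spr_a N k)) \<in> borel_measurable (node_pos N)"
    unfolding node_pos_def using spr_lt(1)[OF k]
    by (intro measurable_PiM_component_rev) auto
  have b: "(\<lambda>x. x (spr_b N k)) \<in> borel_measurable (node_pos N)"
    unfolding node_pos_def using spr_lt(2)[OF k]
    by (intro measurable_PiM_component_rev) auto
  show ?thesis unfolding lbar_def using a b by measurable
qed

lemma lbar_bd: "\<bar>lbar N k x\<bar> \<le> 1/2"
  unfolding lbar_def using rep_half_ge[of "x (spr_b N k) - x (spr_a N k)"] rep_half_lt[of "x (spr_b N k) - x (spr_a N k)"] by linarith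

lemma integrate_out:
  fixes F :: "(nat \<Rightarrow> real) \<Rightarrow> real"
  assumes m: "m < N" and F: "integrable (node_pos N) F"
  shows "(\<integral>x. F x \<partial>node_pos N) = (\<integral>x. (\<integral>y. F (x(m:=y)) \<partial>UU) \<partial>PiM ({..<N}-{m}) (\<lambda>_. UU))"
proof -
  interpret product_sigma_finite "\<lambda>_::nat. UU" by (rule sigfin_UU)
  have e: "insert m ({..<N}-{m}) = {..<N}" using m by auto
  have F': "integrable (Pi\<^sub>M (insert m ({..<N}-{m})) (\<lambda>_. UU)) F"
    using F unfolding e node_pos_def .
  have "integral\<^sup>L (Pi\<^sub>M (insert m ({..<N}-{m})) (\<lambda>_. UU)) F = (\<integral>x. (\<integral>y. F (x(m:=y)) \<partial>UU) \<partial>PiM ({..<N}-{m}) (\<lambda>_. UU))"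
    by (rule product_integral_insert[OF _ _ F']) auto
  thus ?thesis unfolding e node_pos_def .
qed

definition Pf :: "nat \<Rightarrow> nat set \<Rightarrow> (nat \<Rightarrow> real \<Rightarrow> real) \<Rightarrow> (nat \<Rightarrow> real) \<Rightarrow> real" where
  "Pf N S f x = (\<Prod>k\<in>S. f k (lbar N k x))"

lemma Pf_meas:
  assumes "S \<subseteq> {..<N}" "\<And>k. k \<in> S \<Longrightarrow> f k \<in> borel_measurable borel"
  shows "Pf N S f \<in> borel_measurable (node_pos N)"
  unfolding Pf_def
proof (rule borel_measurable_prod)
  fix k assume k: "k \<in> S"
  have [measurable]: "f k \<in> borel_measurable borel" using assms(2)[OF k] .
  have [measurable]: "lbar N k \<in> borel_measurable (node_pos N)" using k assms(1) by (intro lbar_meas) auto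
  show "(\<lambda>x. f k (lbar N k x)) \<in> borel_measurable (node_pos N)" by measurable
qed

lemma Pf_bound:
  assumes "\<And>k t. k \<in> S \<Longrightarrow> -1/2 \<le> t \<Longrightarrow> t < 1/2 \<Longrightarrow> \<bar>f k t\<bar> \<le> C"
  shows "\<bar>Pf N S f x\<bar> \<le> \<bar>C\<bar> ^ card S"
proof -
  have "\<bar>Pf N S f x\<bar> = (\<Prod>k\<in>S. \<bar>f k (lbar N k x)\<bar>)" unfolding Pf_def by (simp add: abs_prod)
  also have "\<dots> \<le> (\<Prod>k\<in>S. \<bar>C\<bar>)"
  proof (rule prod_mono)
    fix k assume k: "k \<in> S"
    have "-1/2 \<le> lbar N k x" "lbar N k x < 1/2" unfolding lbar_def by (rule rep_half_ge, rule rep_half_lt)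
    thus "0 \<le> \<bar>f k (lbar N k x)\<bar> \<and> \<bar>f k (lbar N k x)\<bar> \<le> \<bar>C\<bar>" using assms[OF k] by fastforce
  qed
  finally show ?thesis by simp
qed

lemma Pf_integrable:
  assumes "S \<subseteq> {..<N}" "\<And>k. k \<in> S \<Longrightarrow> f k \<in> borel_measurable borel"
    "\<And>k t. k \<in> S \<Longrightarrow> -1/2 \<le> t \<Longrightarrow> t < 1/2 \<Longrightarrow> \<bar>f k t\<bar> \<le> C"
  shows "integrable (node_pos N) (Pf N S f)"
proof -
  interpret prob_space "node_pos N" by (rule prob_M)
  show ?thesis
    by (rule integrable_const_bound[where B="\<bar>C\<bar> ^ card S"])
       (use Pf_bound[OF assms(3)] Pf_meas[OF assms(1,2)] in auto)
qed

lemma exists_leaf: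
  assumes S: "S \<subseteq> {..<N}" "S \<noteq> {}" "card S < N"
  shows "\<exists>e\<in>S. Suc e mod N \<notin> S"
proof (rule ccontr)
  assume "\<not> ?thesis"
  hence cl: "\<And>e. e \<in> S \<Longrightarrow> Suc e mod N \<in> S" by auto
  obtain e0 where e0: "e0 \<in> S" using S(2) by auto
  have e0N: "e0 < N" using e0 S(1) by auto
  have all: "(e0 + j) mod N \<in> S" for j
  proof (induction j)
    case 0 then show ?case using e0 e0N by simp
  next
    case (Suc j)
    have "(e0 + Suc j) mod N = Suc ((e0 + j) mod N) mod N" by (simp add: mod_Suc_eq)
    then show ?case using cl[OF Suc] by simp
  qed
  have "{..<N} \<subseteq> S"
  proof
    fix i assume i: "i \<in> {..<N}"
    have "(e0 + (N - e0 + i)) mod N = i" using e0N i by simp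
    thus "i \<in> S" using all[of "N - e0 + i"] by simp
  qed
  hence "card {..<N} \<le> card S" using S(1) by (intro card_mono) (auto intro: finite_subset)
  thus False using S(3) by simp
qed

lemma integral_const_UU: "(\<integral>y. c \<partial>UU) = (c::real)"
  using prob_space.prob_space[OF prob_UU] by simp

lemma prod_lemma:
  assumes N2: "2 \<le> N"
  shows "S \<subseteq> {..<N} \<Longrightarrow> card S < N \<Longrightarrow> (\<And>k. k \<in> S \<Longrightarrow> f k \<in> borel_measurable borel)
    \<Longrightarrow> (\<And>k t. k \<in> S \<Longrightarrow> -1/2 \<le> t \<Longrightarrow> t < 1/2 \<Longrightarrow> \<bar>f k t\<bar> \<le> C)
    \<Longrightarrow> integral\<^sup>L (node_pos N) (Pf N S f) = (\<Prod>k\<in>S. Ju (f k))"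
proof (induction "card S" arbitrary: S)
  case 0
  have "finite S" using 0(2) finite_subset by blast
  hence "S = {}" using 0(1) by simp
  thus ?case using prob_space.prob_space[OF prob_M[of N]] unfolding Pf_def by simp
next
  case (Suc n)
  have fin: "finite S" using Suc(3) finite_subset by blast
  have ne: "S \<noteq> {}" using Suc(2) by auto
  obtain e where e: "e \<in> S" and me: "Suc e mod N \<notin> S" using exists_leaf[OF Suc(3) ne Suc(4)] by blast
  define m where "m = Suc e mod N"
  define S' where "S' = S - {e}"
  have eN: "e < N" using e Suc(3) by auto
  have mN: "m < N" unfolding m_def using N2 by simp
  have mS: "m \<notin> S" using me m_def by simp
  have S'sub: "S' \<subseteq> {..<N}" using Suc(3) S'_def by auto
  have cS': "n = card S'" using Suc(2) e fin S'_def by simp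
  have IH: "integral\<^sup>L (node_pos N) (Pf N S' f) = (\<Prod>k\<in>S'. Ju (f k))"
  proof (rule Suc(1)[OF cS' S'sub])
    show "card S' < N" using cS' Suc(2) Suc(4) by linarith
  qed (use Suc(5,6) S'_def in auto)
  have fe[measurable]: "f e \<in> borel_measurable borel" using Suc(5) e by auto
  have feb: "\<And>t. -1/2 \<le> t \<Longrightarrow> t < 1/2 \<Longrightarrow> \<bar>f e t\<bar> \<le> C" using Suc(6) e by auto
  have indep: "Pf N S' f (x(m:=y)) = Pf N S' f x" for x y
    unfolding Pf_def
  proof (rule prod.cong[OF refl])
    fix k assume k: "k \<in> S'"
    have kS: "k \<in> S" "k \<noteq> e" using k S'_def by auto
    have kN: "k < N" using kS Suc(3) by auto
    have "k \<noteq> m" using kS mS by auto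
    moreover have "Suc k mod N \<noteq> m" unfolding m_def using suc_mod_inj[OF kN eN] kS by auto
    ultimately have "spr_a N k \<noteq> m" "spr_b N k \<noteq> m" using spr_in[of N k] by auto
    thus "f k (lbar N k (x(m:=y))) = f k (lbar N k x)" unfolding lbar_def by simp
  qed
  have split: "Pf N S f z = f e (lbar N e z) * Pf N S' f z" for z
    unfolding Pf_def S'_def using fin e by (simp add: prod.remove)
  have inner: "(\<integral>y. f e (lbar N e (x(m:=y))) \<partial>UU) = Ju (f e)" for x
  proof (cases "Suc e < N")
    case True
    hence "m = Suc e" unfolding m_def by simp
    moreover have "spr_a N e = e" "spr_b N e = Suc e" using True unfolding spr_a_def spr_b_def by auto
    ultimately have "\<And>y. lbar N e (x(m:=y)) = rep_half (y - x e)" unfolding lbar_def by simp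
    thus ?thesis using unif_shift(1)[OF fe feb] by simp
  next
    case False
    hence SN: "Suc e = N" using eN by simp
    hence m0: "m = 0" unfolding m_def by simp
    have e0: "e \<noteq> 0" using SN N2 by auto
    have "spr_a N e = 0" "spr_b N e = e" using SN unfolding spr_a_def spr_b_def by auto
    hence "\<And>y. lbar N e (x(m:=y)) = rep_half (x e - y)" unfolding lbar_def using m0 e0 by simp
    thus ?thesis using unif_shift(2)[OF fe feb] by simp
  qed
  have intS: "integrable (node_pos N) (Pf N S f)"
    by (rule Pf_integrable[OF Suc(3)]) (use Suc(5,6) in auto)
  have intS': "integrable (node_pos N) (Pf N S' f)"
    by (rule Pf_integrable[OF S'sub]) (use Suc(5,6) S'_def in auto)
  have "integral\<^sup>L (node_pos N) (Pf N S f) = (\<integral>x. (\<integral>y. Pf N S f (x(m:=y)) \<partial>UU) \<partial>PiM ({..<N}-{m}) (\<lambda>_. UU))"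
    by (rule integrate_out[OF mN intS])
  also have "\<dots> = (\<integral>x. Ju (f e) * Pf N S' f x \<partial>PiM ({..<N}-{m}) (\<lambda>_. UU))"
    by (intro Bochner_Integration.integral_cong refl) (simp add: split indep inner)
  also have "\<dots> = Ju (f e) * (\<integral>x. Pf N S' f x \<partial>PiM ({..<N}-{m}) (\<lambda>_. UU))" by simp
  also have "(\<integral>x. Pf N S' f x \<partial>PiM ({..<N}-{m}) (\<lambda>_. UU)) = (\<integral>x. (\<integral>y. Pf N S' f (x(m:=y)) \<partial>UU) \<partial>PiM ({..<N}-{m}) (\<lambda>_. UU))"
    by (simp add: indep integral_const_UU)
  also have "\<dots> = integral\<^sup>L (node_pos N) (Pf N S' f)"
    by (rule integrate_out[OF mN intS', symmetric])
  also have "Ju (f e) * \<dots> = (\<Prod>k\<in>S. Ju (f k))"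
    using IH fin e unfolding S'_def by (simp add: prod.remove)
  finally show ?case .
qed



lemma Ju_pow: "Ju (\<lambda>t. t^k) = ((1/2)^Suc k - (-1/2)^Suc k) / Suc k"
proof -
  have "Ju (\<lambda>t. t^k) = (\<integral>x. x^k * indicator {-1/2..1/2} x \<partial>lborel)"
    unfolding Ju_def
    by (rule integral_cong_AE) (use AE_lborel_singleton[of "1/2"] in \<open>auto elim!: eventually_mono simp: indicator_def\<close>)
  also have "\<dots> = ((1/2)^Suc k - (-1/2)^Suc k) / Suc k" by (rule integral_power) simp
  finally show ?thesis .
qed

lemma Ju_1: "Ju (\<lambda>t. 1) = 1" using Ju_pow[of 0] by simp
lemma Ju_id: "Ju (\<lambda>t. t) = 0" using Ju_pow[of 1] by simp
lemma Ju_sq: "Ju (\<lambda>t. t^2) = 1/12" using Ju_pow[of 2] by (simp add: numeral_eq_Suc)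

lemma int_bdd_M:
  fixes F :: "(nat \<Rightarrow> real) \<Rightarrow> real"
  assumes "F \<in> borel_measurable (node_pos N)" "\<And>x. \<bar>F x\<bar> \<le> C"
  shows "integrable (node_pos N) F"
proof -
  interpret prob_space "node_pos N" by (rule prob_M)
  show ?thesis by (rule integrable_const_bound[where B=C]) (use assms in auto)
qed

lemma mom_gen:
  assumes N4: "4 \<le> N" and S: "S \<subseteq> {..<N}" "card S \<le> 3" and iS: "i \<in> S"
    and B: "B \<in> sets borel"
    and g[measurable]: "g \<in> borel_measurable borel" and gb: "\<And>t. -1/2 \<le> t \<Longrightarrow> t < 1/2 \<Longrightarrow> \<bar>g t\<bar> \<le> 1"
  shows "(\<integral>x. indicator B (lbar N i x) * (\<Prod>k\<in>S-{i}. g (lbar N k x)) \<partial>node_pos N)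
     = Ju (indicator B) * Ju g ^ (card S - 1)"
proof -
  define f where "f = (\<lambda>k. if k = i then indicator B else g)"
  have fin: "finite S" using S(1) finite_subset by blast
  have "integral\<^sup>L (node_pos N) (Pf N S f) = (\<Prod>k\<in>S. Ju (f k))"
  proof (rule prod_lemma[where C=1])
    show "2 \<le> N" "card S < N" using N4 S(2) by auto
  qed (use S(1) B in \<open>auto simp: f_def gb\<close>)
  moreover have "Pf N S f = (\<lambda>x. indicator B (lbar N i x) * (\<Prod>k\<in>S-{i}. g (lbar N k x)))"
    unfolding Pf_def fun_eq_iff using fin iS by (simp add: prod.remove f_def)
  moreover have "(\<Prod>k\<in>S. Ju (f k)) = Ju (indicator B) * Ju g ^ (card S - 1)"
    using fin iS by (simp add: prod.remove f_def)
  ultimately show ?thesis by simp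
qed



lemma cond_var_const:
  fixes M :: "'a measure" and A X :: "'a \<Rightarrow> real" and m :: "real \<Rightarrow> real"
  assumes P: "prob_space M" and Am[measurable]: "A \<in> borel_measurable M"
    and Xm[measurable]: "X \<in> borel_measurable M" and mm[measurable]: "m \<in> borel_measurable borel"
    and iX: "integrable M X" and im: "integrable M (\<lambda>x. m (A x))" and iV: "integrable M (\<lambda>x. (X x - m (A x))^2)"
    and h1: "\<And>B. B \<in> sets borel \<Longrightarrow> (\<integral>x. indicator B (A x) * X x \<partial>M) = (\<integral>x. indicator B (A x) * m (A x) \<partial>M)"
    and h2: "\<And>B. B \<in> sets borel \<Longrightarrow> (\<integral>x. indicator B (A x) * (X x - m (A x))^2 \<partial>M) = v * (\<integral>x. indicator B (A x) \<partial>M)"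
  shows "AE x in M. cond_var M (vimage_algebra (space M) A borel) X x = v"
proof -
  interpret prob_space M by (rule P)
  define F where "F = vimage_algebra (space M) A borel"
  have Af: "A \<in> space M \<rightarrow> space borel" by simp
  have setsF: "sets F = {A -` B \<inter> space M | B. B \<in> sets borel}"
    unfolding F_def by (rule sets_vimage_algebra2[OF Af])
  have sub: "subalgebra M F" unfolding subalgebra_def
  proof
    show "sets F \<subseteq> sets M" unfolding setsF using Am by (auto intro: measurable_sets)
    show "space F = space M" unfolding F_def by simp
  qed
  interpret finite_measure_subalgebra M F by unfold_locales (rule sub)
  have AF: "A \<in> measurable F borel" unfolding F_def by (rule measurable_vimage_algebra1[OF Af])
  have mAF: "(\<lambda>x. m (A x)) \<in> borel_measurable F" using measurable_comp[OF AF mm] by (simp add: comp_def)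
  have setint: "\<exists>B\<in>sets borel. \<forall>x\<in>space M. indicator S x = (indicator B (A x) :: real)" if "S \<in> sets F" for S
  proof -
    have "S \<in> {A -` B \<inter> space M | B. B \<in> sets borel}" using that unfolding setsF .
    then obtain B where B: "B \<in> sets borel" "S = A -` B \<inter> space M" by (auto simp only: mem_Collect_eq)
    thus ?thesis by (intro bexI[of _ B]) (auto simp: indicator_def)
  qed
  have E1: "AE x in M. real_cond_exp M F X x = m (A x)"
  proof (rule real_cond_exp_charact[OF _ iX im mAF])
    fix S assume S: "S \<in> sets F"
    obtain B where B: "B \<in> sets borel" "\<forall>x\<in>space M. indicator S x = (indicator B (A x) :: real)" using setint[OF S] by blast
    have "(\<integral>x\<in>S. X x \<partial>M) = (\<integral>x. indicator B (A x) * X x \<partial>M)"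
      unfolding set_lebesgue_integral_def using B(2) by (intro Bochner_Integration.integral_cong) auto
    also have "\<dots> = (\<integral>x. indicator B (A x) * m (A x) \<partial>M)" by (rule h1[OF B(1)])
    also have "\<dots> = (\<integral>x\<in>S. m (A x) \<partial>M)"
      unfolding set_lebesgue_integral_def using B(2) by (intro Bochner_Integration.integral_cong) auto
    finally show "(\<integral>x\<in>S. X x \<partial>M) = (\<integral>x\<in>S. m (A x) \<partial>M)" .
  qed
  have E2: "AE x in M. real_cond_exp M F (\<lambda>x. (X x - real_cond_exp M F X x)^2) x = real_cond_exp M F (\<lambda>x. (X x - m (A x))^2) x"
    by (rule real_cond_exp_cong) (use E1 in \<open>auto elim!: eventually_mono\<close>)
  have E3: "AE x in M. real_cond_exp M F (\<lambda>x. (X x - m (A x))^2) x = v"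
  proof (rule real_cond_exp_charact[OF _ iV])
    show "integrable M (\<lambda>x. v)" by simp
    show "(\<lambda>x. v) \<in> borel_measurable F" by simp
    fix S assume S: "S \<in> sets F"
    obtain B where B: "B \<in> sets borel" "\<forall>x\<in>space M. indicator S x = (indicator B (A x) :: real)" using setint[OF S] by blast
    have "(\<integral>x\<in>S. (X x - m (A x))^2 \<partial>M) = (\<integral>x. indicator B (A x) * (X x - m (A x))^2 \<partial>M)"
      unfolding set_lebesgue_integral_def using B(2) by (intro Bochner_Integration.integral_cong) auto
    also have "\<dots> = v * (\<integral>x. indicator B (A x) \<partial>M)" by (rule h2[OF B(1)])
    also have "\<dots> = (\<integral>x. indicator B (A x) * v \<partial>M)" by simp
    also have "\<dots> = (\<integral>x\<in>S. v \<partial>M)"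
      unfolding set_lebesgue_integral_def using B(2) by (intro Bochner_Integration.integral_cong) auto
    finally show "(\<integral>x\<in>S. (X x - m (A x))^2 \<partial>M) = (\<integral>x\<in>S. v \<partial>M)" .
  qed
  show ?thesis using E2 E3 unfolding cond_var_def F_def[symmetric] by eventually_elim simp
qed



lemma cyc_sq: "cyc N j * cyc N j = 1" unfolding cyc_def by simp
lemma cyc_abs: "\<bar>cyc N j\<bar> = 1" unfolding cyc_def by simp

lemma Ju_sq': "Ju (\<lambda>t. t*t) = 1/12" using Ju_sq by (simp add: power2_eq_square)

lemma sum_cyc_sq: "(\<Sum>j<N. cyc N j * cyc N j) = real N" by (simp add: cyc_sq)

definition gs :: "nat \<Rightarrow> nat \<Rightarrow> (nat \<Rightarrow> real) \<Rightarrow> real" where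
  "gs N i x = (\<Sum>j\<in>{..<N}-{i}. cyc N j * lbar N j x)"

lemma dl_decomp:
  assumes i: "i < N"
  shows "dl N i x = cyc N i / real N * gs N i x + (1 / real N - 1) * lbar N i x"
proof -
  have N: "real N > 0" using i by simp
  have w: "winding N x = cyc N i * lbar N i x + gs N i x"
    unfolding winding_def gs_def using i by (simp add: sum.remove)
  have "dl N i x = cyc N i * (1 / real N) * (cyc N i * lbar N i x + gs N i x) - lbar N i x"
    unfolding dl_def lstar_def sum_cyc_sq w ..
  also have "\<dots> = (cyc N i * cyc N i) * lbar N i x / real N + cyc N i / real N * gs N i x - lbar N i x"
    by (simp add: field_simps, simp add: add_divide_distrib)
  also have "\<dots> = cyc N i / real N * gs N i x + (1 / real N - 1) * lbar N i x"
    by (simp add: cyc_sq field_simps)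
  finally show ?thesis .
qed

lemma winding_bd: "\<bar>winding N x\<bar> \<le> real N / 2"
proof -
  have "\<bar>winding N x\<bar> \<le> (\<Sum>j<N. \<bar>cyc N j * lbar N j x\<bar>)" unfolding winding_def by (rule sum_abs)
  also have "\<dots> \<le> (\<Sum>j<N. 1/2)"
  proof (intro sum_mono)
    fix j
    have "\<bar>lbar N j x\<bar> \<le> 1/2" by (rule lbar_bd)
    thus "\<bar>cyc N j * lbar N j x\<bar> \<le> 1/2" by (simp add: abs_mult cyc_abs)
  qed
  finally show ?thesis by simp
qed

lemma dl_bd: assumes "0 < N" shows "\<bar>dl N i x\<bar> \<le> 1"
proof -
  have "\<bar>lstar N i x\<bar> = \<bar>winding N x\<bar> / real N"
    unfolding lstar_def sum_cyc_sq by (simp add: abs_mult cyc_abs)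
  also have "\<dots> \<le> (real N / 2) / real N" by (rule divide_right_mono[OF winding_bd]) simp
  also have "\<dots> = 1/2" using assms by simp
  finally show ?thesis unfolding dl_def using lbar_bd[of N i x] by linarith
qed

lemma mfun_bd: assumes "0 < N" shows "\<bar>(1 / real N - 1) * t\<bar> \<le> \<bar>t\<bar>"
proof -
  have "\<bar>1 / real N - 1\<bar> \<le> 1" using assms by (simp add: abs_le_iff field_simps)
  thus ?thesis by (simp add: abs_mult mult_left_le_one_le)
qed

lemma winding_meas: "winding N \<in> borel_measurable (node_pos N)"
  unfolding winding_def
  by (intro borel_measurable_sum borel_measurable_times measurable_const lbar_meas) auto

lemma dl_meas: "i < N \<Longrightarrow> dl N i \<in> borel_measurable (node_pos N)"
  unfolding dl_def lstar_def
  by (intro borel_measurable_diff borel_measurable_times measurable_const winding_meas lbar_meas) auto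

lemma mom_single:
  assumes N4: "4 \<le> N" and k: "k < N" and g[measurable]: "g \<in> borel_measurable borel"
    and gb: "\<And>t. -1/2 \<le> t \<Longrightarrow> t < 1/2 \<Longrightarrow> \<bar>g t\<bar> \<le> 1"
  shows "(\<integral>x. g (lbar N k x) \<partial>node_pos N) = Ju g"
proof -
  have "integral\<^sup>L (node_pos N) (Pf N {k} (\<lambda>_. g)) = (\<Prod>k\<in>{k}. Ju g)"
    by (rule prod_lemma[where C=1]) (use N4 k gb in auto)
  thus ?thesis unfolding Pf_def by simp
qed

context
  fixes N i :: nat and B :: "real set"
  assumes N4: "4 \<le> N" and iN: "i < N" and B: "B \<in> sets borel"
begin

lemma indB_meas[measurable]: "indicator B \<in> borel_measurable (borel :: real measure)"
  using B by simp

lemma indB_bd: "\<bar>indicator B t :: real\<bar> \<le> 1" by (simp add: indicator_def)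

lemma momB0: "(\<integral>x. indicator B (lbar N i x) \<partial>node_pos N) = Ju (indicator B)"
  by (rule mom_single[OF N4 iN indB_meas]) (simp add: indicator_def)

lemma momB1: assumes j: "j \<in> {..<N}-{i}"
  shows "(\<integral>x. indicator B (lbar N i x) * lbar N j x \<partial>node_pos N) = 0"
proof -
  have "(\<integral>x. indicator B (lbar N i x) * (\<Prod>k\<in>{i,j}-{i}. lbar N k x) \<partial>node_pos N)
     = Ju (indicator B) * Ju (\<lambda>t. t) ^ (card {i,j} - 1)"
    by (rule mom_gen[OF N4 _ _ _ B]) (use iN j in auto)
  moreover have "{i,j}-{i} = {j}" using j by auto
  ultimately show ?thesis using j by (simp add: Ju_id)
qed

lemma momB2: assumes j: "j \<in> {..<N}-{i}" and k: "k \<in> {..<N}-{i}"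
  shows "(\<integral>x. indicator B (lbar N i x) * (lbar N j x * lbar N k x) \<partial>node_pos N)
    = (if j = k then Ju (indicator B) / 12 else 0)"
proof (cases "j = k")
  case True
  have "(\<integral>x. indicator B (lbar N i x) * (\<Prod>k\<in>{i,j}-{i}. (lbar N k x)^2) \<partial>node_pos N)
     = Ju (indicator B) * Ju (\<lambda>t. t^2) ^ (card {i,j} - 1)"
  proof (rule mom_gen[OF N4 _ _ _ B])
    show "\<And>t. -1/2 \<le> t \<Longrightarrow> t < 1/2 \<Longrightarrow> \<bar>t^2\<bar> \<le> (1::real)"
    proof -
      fix t :: real assume "-1/2 \<le> t" "t < 1/2"
      hence "\<bar>t\<bar> \<le> 1" by linarith
      hence "\<bar>t\<bar>^2 \<le> 1" by (rule power_le_one[OF abs_ge_zero])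
      thus "\<bar>t^2\<bar> \<le> 1" by simp
    qed
  qed (use iN j in auto)
  moreover have "{i,j}-{i} = {j}" using j by auto
  ultimately show ?thesis using j True by (simp add: Ju_sq' power2_eq_square)
next
  case False
  have "(\<integral>x. indicator B (lbar N i x) * (\<Prod>k\<in>{i,j,k}-{i}. lbar N k x) \<partial>node_pos N)
     = Ju (indicator B) * Ju (\<lambda>t. t) ^ (card {i,j,k} - 1)"
  proof (rule mom_gen[OF N4 _ _ _ B])
    show "card {i, j, k} \<le> 3" by (auto simp: card_insert_if)
  qed (use iN j k in auto)
  moreover have "{i,j,k}-{i} = {j,k}" using j k by auto
  moreover have "card {i,j,k} - 1 = 2" using j k False by auto
  ultimately show ?thesis using j k False by (simp add: Ju_id)
qed

end



context
  fixes N i :: nat and B :: "real set"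
  assumes N4: "4 \<le> N" and iN: "i < N" and B: "B \<in> sets borel"
begin

lemma iA0: "integrable (node_pos N) (\<lambda>x. indicator B (lbar N i x) :: real)"
proof (rule int_bdd_M[where C=1])
  have [measurable]: "lbar N i \<in> borel_measurable (node_pos N)" using iN by (rule lbar_meas)
  have [measurable]: "B \<in> sets borel" by (rule B)
  show "(\<lambda>x. indicator B (lbar N i x)) \<in> borel_measurable (node_pos N)" by measurable
qed (simp add: indicator_def)

lemma iA1: assumes j: "j < N" shows "integrable (node_pos N) (\<lambda>x. indicator B (lbar N i x) * lbar N j x)"
proof (rule int_bdd_M[where C=1])
  have [measurable]: "lbar N i \<in> borel_measurable (node_pos N)" using iN by (rule lbar_meas)
  have [measurable]: "lbar N j \<in> borel_measurable (node_pos N)" using j by (rule lbar_meas)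
  have [measurable]: "B \<in> sets borel" by (rule B)
  show "(\<lambda>x. indicator B (lbar N i x) * lbar N j x) \<in> borel_measurable (node_pos N)" by measurable
  fix x
  have "\<bar>lbar N j x\<bar> \<le> 1/2" by (rule lbar_bd)
  thus "\<bar>indicator B (lbar N i x) * lbar N j x\<bar> \<le> 1" by (simp add: indicator_def)
qed

lemma iA2: assumes j: "j < N" and k: "k < N"
  shows "integrable (node_pos N) (\<lambda>x. indicator B (lbar N i x) * (lbar N j x * lbar N k x))"
proof (rule int_bdd_M[where C=1])
  have [measurable]: "lbar N i \<in> borel_measurable (node_pos N)" using iN by (rule lbar_meas)
  have [measurable]: "lbar N j \<in> borel_measurable (node_pos N)" using j by (rule lbar_meas)
  have [measurable]: "lbar N k \<in> borel_measurable (node_pos N)" using k by (rule lbar_meas)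
  have [measurable]: "B \<in> sets borel" by (rule B)
  show "(\<lambda>x. indicator B (lbar N i x) * (lbar N j x * lbar N k x)) \<in> borel_measurable (node_pos N)" by measurable
  fix x
  have a: "\<bar>lbar N j x\<bar> \<le> 1/2" "\<bar>lbar N k x\<bar> \<le> 1/2" by (rule lbar_bd)+
  have "\<bar>lbar N j x\<bar> * \<bar>lbar N k x\<bar> \<le> 1 * 1" using a
    by (intro mult_mono) auto
  hence "\<bar>lbar N j x * lbar N k x\<bar> \<le> 1" by (simp add: abs_mult)
  thus "\<bar>indicator B (lbar N i x) * (lbar N j x * lbar N k x)\<bar> \<le> 1" by (simp add: indicator_def)
qed

lemma h1M: "(\<integral>x. indicator B (lbar N i x) * dl N i x \<partial>node_pos N)
   = (\<integral>x. indicator B (lbar N i x) * ((1 / real N - 1) * lbar N i x) \<partial>node_pos N)"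
proof -
  let ?J = "{..<N}-{i}"
  let ?c = "cyc N i / real N"
  let ?a = "1 / real N - 1"
  have eq: "indicator B (lbar N i x) * dl N i x = ?c * (\<Sum>j\<in>?J. cyc N j * (indicator B (lbar N i x) * lbar N j x)) + ?a * (indicator B (lbar N i x) * lbar N i x)" for x
    unfolding dl_decomp[OF iN] gs_def by (simp add: sum_distrib_left algebra_simps)
  have iS: "integrable (node_pos N) (\<lambda>x. \<Sum>j\<in>?J. cyc N j * (indicator B (lbar N i x) * lbar N j x))"
    by (intro Bochner_Integration.integrable_sum integrable_mult_right iA1) auto
  have "(\<integral>x. indicator B (lbar N i x) * dl N i x \<partial>node_pos N)
     = (\<integral>x. ?c * (\<Sum>j\<in>?J. cyc N j * (indicator B (lbar N i x) * lbar N j x)) + ?a * (indicator B (lbar N i x) * lbar N i x) \<partial>node_pos N)"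
    by (simp only: eq)
  also have "\<dots> = ?c * (\<integral>x. (\<Sum>j\<in>?J. cyc N j * (indicator B (lbar N i x) * lbar N j x)) \<partial>node_pos N) + ?a * (\<integral>x. indicator B (lbar N i x) * lbar N i x \<partial>node_pos N)"
    using iS iA1[OF iN] by simp
  also have "(\<integral>x. (\<Sum>j\<in>?J. cyc N j * (indicator B (lbar N i x) * lbar N j x)) \<partial>node_pos N) = (\<Sum>j\<in>?J. cyc N j * (\<integral>x. indicator B (lbar N i x) * lbar N j x \<partial>node_pos N))"
    by (subst Bochner_Integration.integral_sum) (auto intro: iA1)
  also have "\<dots> = 0" by (simp add: momB1[OF N4 iN B])
  finally show ?thesis using iA1[OF iN] by (simp add: mult.left_commute)
qed

lemma h2M: "(\<integral>x. indicator B (lbar N i x) * (dl N i x - (1 / real N - 1) * lbar N i x)^2 \<partial>node_pos N)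
   = (real N - 1) / (real N)^2 * (1/12) * (\<integral>x. indicator B (lbar N i x) \<partial>node_pos N)"
proof -
  let ?J = "{..<N}-{i}"
  let ?T = "\<lambda>j k x. indicator B (lbar N i x) * (lbar N j x * lbar N k x)"
  have Npos: "real N > 0" using iN by simp
  have eq: "indicator B (lbar N i x) * (dl N i x - (1 / real N - 1) * lbar N i x)^2
     = 1 / (real N)^2 * (\<Sum>j\<in>?J. \<Sum>k\<in>?J. cyc N j * cyc N k * ?T j k x)" for x
  proof -
    have "dl N i x - (1 / real N - 1) * lbar N i x = cyc N i / real N * gs N i x"
      unfolding dl_decomp[OF iN] by simp
    hence "(dl N i x - (1 / real N - 1) * lbar N i x)^2 = (cyc N i * cyc N i) * (gs N i x * gs N i x) / (real N)^2"
      by (simp add: power2_eq_square field_simps)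
    also have "\<dots> = (gs N i x * gs N i x) / (real N)^2" by (simp add: cyc_sq)
    also have "gs N i x * gs N i x = (\<Sum>j\<in>?J. \<Sum>k\<in>?J. cyc N j * cyc N k * (lbar N j x * lbar N k x))"
      unfolding gs_def sum_product by (intro sum.cong refl) (simp add: algebra_simps)
    finally have sq: "(dl N i x - (1 / real N - 1) * lbar N i x)^2 = (\<Sum>j\<in>?J. \<Sum>k\<in>?J. cyc N j * cyc N k * (lbar N j x * lbar N k x)) / (real N)^2" .
    have "indicator B (lbar N i x) * (\<Sum>j\<in>?J. \<Sum>k\<in>?J. cyc N j * cyc N k * (lbar N j x * lbar N k x))
       = (\<Sum>j\<in>?J. \<Sum>k\<in>?J. cyc N j * cyc N k * ?T j k x)"
      by (simp add: sum_distrib_left algebra_simps)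
    thus ?thesis unfolding sq by simp
  qed
  have iT: "\<And>j k. j \<in> ?J \<Longrightarrow> k \<in> ?J \<Longrightarrow> integrable (node_pos N) (?T j k)"
    by (rule iA2) auto
  have "(\<integral>x. indicator B (lbar N i x) * (dl N i x - (1 / real N - 1) * lbar N i x)^2 \<partial>node_pos N)
     = (\<integral>x. 1 / (real N)^2 * (\<Sum>j\<in>?J. \<Sum>k\<in>?J. cyc N j * cyc N k * ?T j k x) \<partial>node_pos N)"
    by (simp only: eq)
  also have "\<dots> = 1 / (real N)^2 * (\<integral>x. (\<Sum>j\<in>?J. \<Sum>k\<in>?J. cyc N j * cyc N k * ?T j k x) \<partial>node_pos N)"
    by (rule Bochner_Integration.integral_mult_right) (intro Bochner_Integration.integrable_sum integrable_mult_right iT; simp)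
  also have "(\<integral>x. (\<Sum>j\<in>?J. \<Sum>k\<in>?J. cyc N j * cyc N k * ?T j k x) \<partial>node_pos N)
      = (\<Sum>j\<in>?J. \<Sum>k\<in>?J. cyc N j * cyc N k * (\<integral>x. ?T j k x \<partial>node_pos N))"
  proof -
    have "(\<integral>x. (\<Sum>j\<in>?J. \<Sum>k\<in>?J. cyc N j * cyc N k * ?T j k x) \<partial>node_pos N)
      = (\<Sum>j\<in>?J. (\<integral>x. (\<Sum>k\<in>?J. cyc N j * cyc N k * ?T j k x) \<partial>node_pos N))"
      by (rule Bochner_Integration.integral_sum) (intro Bochner_Integration.integrable_sum integrable_mult_right iT; simp)
    also have "\<dots> = (\<Sum>j\<in>?J. \<Sum>k\<in>?J. cyc N j * cyc N k * (\<integral>x. ?T j k x \<partial>node_pos N))"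
    proof (rule sum.cong[OF refl])
      fix j assume j: "j \<in> ?J"
      show "(\<integral>x. (\<Sum>k\<in>?J. cyc N j * cyc N k * ?T j k x) \<partial>node_pos N) = (\<Sum>k\<in>?J. cyc N j * cyc N k * (\<integral>x. ?T j k x \<partial>node_pos N))"
        by (subst Bochner_Integration.integral_sum) (use iT j in \<open>auto intro!: integrable_mult_right\<close>)
    qed
    finally show ?thesis .
  qed
  also have "\<dots> = (\<Sum>j\<in>?J. \<Sum>k\<in>?J. cyc N j * cyc N k * (if j = k then Ju (indicator B) / 12 else 0))"
    by (intro sum.cong refl) (simp add: momB2[OF N4 iN B])
  also have "\<dots> = (\<Sum>j\<in>?J. Ju (indicator B) / 12)"
  proof (rule sum.cong[OF refl])
    fix j assume j: "j \<in> ?J"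
    have "(\<Sum>k\<in>?J. cyc N j * cyc N k * (if j = k then Ju (indicator B) / 12 else 0))
        = (\<Sum>k\<in>?J. if j = k then Ju (indicator B) / 12 else 0)"
      by (intro sum.cong refl) (simp add: cyc_sq)
    also have "\<dots> = Ju (indicator B) / 12" using j by simp
    finally show "(\<Sum>k\<in>?J. cyc N j * cyc N k * (if j = k then Ju (indicator B) / 12 else 0)) = Ju (indicator B) / 12" .
  qed
  also have "\<dots> = (real N - 1) * (Ju (indicator B) / 12)" using iN by (simp add: of_nat_diff)
  finally show ?thesis using momB0[OF N4 iN B] Npos by (simp add: field_simps)
qed

end



lemma prob_E: "0 < N \<Longrightarrow> prob_space (edge_space N)"
  unfolding edge_space_def
  by (intro prob_space_pair prob_M prob_space_uniform_count_measure) auto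

lemma edge_meas_gen:
  fixes f :: "nat \<Rightarrow> (nat \<Rightarrow> real) \<Rightarrow> real"
  assumes "\<And>I. I < N \<Longrightarrow> f I \<in> borel_measurable (node_pos N)"
  shows "(\<lambda>(x, I). f I x) \<in> borel_measurable (edge_space N)"
proof -
  have s: "snd \<in> measurable (edge_space N) (count_space {..<N})"
  proof -
    have "snd \<in> measurable (edge_space N) (uniform_count_measure {..<N})"
      unfolding edge_space_def by (rule measurable_snd)
    thus ?thesis by (subst measurable_cong_sets[OF refl sets_uniform_count_measure_count_space[symmetric]])
  qed
  have "(\<lambda>w. f (snd w) (fst w)) \<in> borel_measurable (edge_space N)"
  proof (rule measurable_compose_countable'[OF _ s])
    fix I assume "I \<in> {..<N}"
    hence "f I \<in> borel_measurable (node_pos N)" using assms by auto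
    thus "(\<lambda>w. f I (fst w)) \<in> borel_measurable (edge_space N)"
      unfolding edge_space_def using measurable_fst by (rule measurable_compose[rotated])
  qed auto
  moreover have "(\<lambda>(x, I). f I x) = (\<lambda>w. f (snd w) (fst w))" by (auto simp: fun_eq_iff)
  ultimately show ?thesis by simp
qed

lemma edge_int:
  fixes H :: "(nat \<Rightarrow> real) \<Rightarrow> nat \<Rightarrow> real"
  assumes N: "0 < N" and Hm: "case_prod H \<in> borel_measurable (edge_space N)" and Hb: "\<And>x I. \<bar>H x I\<bar> \<le> C"
  shows "integrable (edge_space N) (case_prod H)"
    and "integral\<^sup>L (edge_space N) (case_prod H) = (\<Sum>I<N. \<integral>x. H x I \<partial>node_pos N) / real N"
proof -
  interpret E: prob_space "edge_space N" by (rule prob_E[OF N])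
  show I: "integrable (edge_space N) (case_prod H)"
    by (rule E.integrable_const_bound[where B=C]) (use Hm Hb in auto)
  interpret pair_sigma_finite "node_pos N" "uniform_count_measure {..<N}"
    by (intro pair_sigma_finite.intro prob_space_imp_sigma_finite prob_M prob_space_uniform_count_measure) (use N in auto)
  have "integral\<^sup>L (edge_space N) (case_prod H) = (\<integral>I. (\<integral>x. H x I \<partial>node_pos N) \<partial>uniform_count_measure {..<N})"
    using integral_snd[of H] I unfolding edge_space_def by simp
  also have "\<dots> = (\<Sum>I<N. \<integral>x. H x I \<partial>node_pos N) / real N"
    by (simp add: integral_uniform_count_measure)
  finally show "integral\<^sup>L (edge_space N) (case_prod H) = (\<Sum>I<N. \<integral>x. H x I \<partial>node_pos N) / real N" .
qed



lemma sq_bd: "\<bar>a::real\<bar> \<le> 1/2 \<Longrightarrow> \<bar>a^2\<bar> \<le> 1"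
proof -
  assume "\<bar>a\<bar> \<le> 1/2" hence "\<bar>a\<bar> \<le> 1" by linarith
  hence "\<bar>a\<bar>^2 \<le> 1" by (rule power_le_one[OF abs_ge_zero])
  thus ?thesis by simp
qed

lemma edge_gen:
  fixes \<Phi> :: "real \<Rightarrow> real \<Rightarrow> real"
  assumes N: "0 < N" and \<Phi>m: "case_prod \<Phi> \<in> borel_measurable (borel \<Otimes>\<^sub>M borel)"
    and \<Phi>b: "\<And>a b. \<bar>a\<bar> \<le> 1/2 \<Longrightarrow> \<bar>b\<bar> \<le> 1 \<Longrightarrow> \<bar>\<Phi> a b\<bar> \<le> C"
  shows "(\<lambda>(x, I). \<Phi> (lbar N I x) (dl N I x)) \<in> borel_measurable (edge_space N)"
    and "integrable (edge_space N) (\<lambda>(x, I). \<Phi> (lbar N I x) (dl N I x))"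
    and "integral\<^sup>L (edge_space N) (\<lambda>(x, I). \<Phi> (lbar N I x) (dl N I x))
       = (\<Sum>I<N. \<integral>x. \<Phi> (lbar N I x) (dl N I x) \<partial>node_pos N) / real N"
proof -
  have pm: "(\<lambda>x. \<Phi> (lbar N I x) (dl N I x)) \<in> borel_measurable (node_pos N)" if I: "I < N" for I
  proof -
    have "(\<lambda>x. (lbar N I x, dl N I x)) \<in> measurable (node_pos N) (borel \<Otimes>\<^sub>M borel)"
      by (intro measurable_Pair lbar_meas dl_meas I)
    from measurable_comp[OF this \<Phi>m] show ?thesis by (simp add: comp_def)
  qed
  show m: "(\<lambda>(x, I). \<Phi> (lbar N I x) (dl N I x)) \<in> borel_measurable (edge_space N)"
    by (rule edge_meas_gen[where f="\<lambda>I x. \<Phi> (lbar N I x) (dl N I x)", simplified]) (rule pm)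
  have b: "\<bar>\<Phi> (lbar N I x) (dl N I x)\<bar> \<le> C" for x I
    by (rule \<Phi>b[OF lbar_bd dl_bd[OF N]])
  show "integrable (edge_space N) (\<lambda>(x, I). \<Phi> (lbar N I x) (dl N I x))"
    by (rule edge_int(1)[where H="\<lambda>x I. \<Phi> (lbar N I x) (dl N I x)", OF N m b])
  show "integral\<^sup>L (edge_space N) (\<lambda>(x, I). \<Phi> (lbar N I x) (dl N I x))
       = (\<Sum>I<N. \<integral>x. \<Phi> (lbar N I x) (dl N I x) \<partial>node_pos N) / real N"
    by (rule edge_int(2)[where H="\<lambda>x I. \<Phi> (lbar N I x) (dl N I x)", OF N m b])
qed

theorem mainTheorem5:
  fixes N :: nat
  assumes "N \<ge> 4"
  shows "(\<forall>i<N. prob_space.variance (node_pos N) (lbar N i) = 1/12)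
    \<and> (\<forall>i<N. AE x in node_pos N.
          cond_var (node_pos N) (vimage_algebra (space (node_pos N)) (lbar N i) borel) (dl N i) x
            = (real N - 1) / (real N)\<^sup>2 * (1/12))
    \<and> (AE w in edge_space N.
          cond_var (edge_space N)
             (vimage_algebra (space (edge_space N)) (\<lambda>(x, I). lbar N I x) borel)
             (\<lambda>(x, I). dl N I x) w
            = (real N - 1) / (12 * (real N)\<^sup>2))
    \<and> (\<integral>w. cond_var (edge_space N)
             (vimage_algebra (space (edge_space N)) (\<lambda>(x, I). lbar N I x) borel)
             (\<lambda>(x, I). dl N I x) w \<partial>edge_space N)
            = (real N - 1) / (12 * (real N)\<^sup>2)"
proof -
  have N4: "4 \<le> N" using assms .
  have N0: "0 < N" using N4 by simp
  interpret M: prob_space "node_pos N" by (rule prob_M)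
  interpret E: prob_space "edge_space N" by (rule prob_E[OF N0])
  let ?v = "(real N - 1) / (real N)\<^sup>2 * (1/12)"
  let ?m = "\<lambda>t. (1 / real N - 1) * t"
  have idb: "\<And>t. -1/2 \<le> t \<Longrightarrow> t < 1/2 \<Longrightarrow> \<bar>t\<bar> \<le> (1::real)" by auto
  have sqb: "\<And>t. -1/2 \<le> t \<Longrightarrow> t < 1/2 \<Longrightarrow> \<bar>t^2\<bar> \<le> (1::real)" by (rule sq_bd) auto
  have P1: "\<forall>i<N. M.variance (lbar N i) = 1/12"
  proof (intro allI impI)
    fix i assume i: "i < N"
    have e: "M.expectation (lbar N i) = 0"
    proof -
      have "(\<integral>x. (\<lambda>t. t) (lbar N i x) \<partial>node_pos N) = Ju (\<lambda>t. t)"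
        by (rule mom_single[OF N4 i _ idb]) simp
      thus ?thesis using Ju_id by simp
    qed
    have "M.variance (lbar N i) = (\<integral>x. (lbar N i x)^2 \<partial>node_pos N)" by (simp add: e)
    also have "\<dots> = Ju (\<lambda>t. t^2)"
    proof -
      have "(\<integral>x. (\<lambda>t. t^2) (lbar N i x) \<partial>node_pos N) = Ju (\<lambda>t. t^2)"
        by (rule mom_single[OF N4 i _ sqb]) simp
      thus ?thesis by simp
    qed
    also have "\<dots> = 1/12" by (rule Ju_sq)
    finally show "M.variance (lbar N i) = 1/12" .
  qed
  have vb: "\<bar>(x - ?m a)^2\<bar> \<le> 3" if "\<bar>a\<bar> \<le> 1/2" "\<bar>x\<bar> \<le> 1" for a x
  proof -
    have "\<bar>?m a\<bar> \<le> 1/2" using mfun_bd[OF N0, of a] that by linarith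
    hence "\<bar>x - ?m a\<bar> \<le> 3/2" using that by linarith
    hence "\<bar>x - ?m a\<bar>^2 \<le> (3/2)^2" by (rule power_mono) simp
    hence "(x - ?m a)^2 \<le> 9/4" by (simp add: power2_eq_square)
    thus ?thesis by simp
  qed
  have P2: "\<forall>i<N. AE x in node_pos N.
          cond_var (node_pos N) (vimage_algebra (space (node_pos N)) (lbar N i) borel) (dl N i) x = ?v"
  proof (intro allI impI)
    fix i assume i: "i < N"
    have [measurable]: "lbar N i \<in> borel_measurable (node_pos N)" by (rule lbar_meas[OF i])
    have [measurable]: "dl N i \<in> borel_measurable (node_pos N)" by (rule dl_meas[OF i])
    show "AE x in node_pos N. cond_var (node_pos N) (vimage_algebra (space (node_pos N)) (lbar N i) borel) (dl N i) x = ?v"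
    proof (rule cond_var_const[where m="?m"])
      show "prob_space (node_pos N)" by (rule prob_M)
      show "integrable (node_pos N) (dl N i)" by (rule int_bdd_M[where C=1]) (auto intro: dl_bd[OF N0])
      show "integrable (node_pos N) (\<lambda>x. ?m (lbar N i x))"
      proof (rule int_bdd_M[where C="1/2"])
        fix x show "\<bar>?m (lbar N i x)\<bar> \<le> 1/2" using mfun_bd[OF N0, of "lbar N i x"] lbar_bd[of N i x] by linarith
      qed auto
      show "integrable (node_pos N) (\<lambda>x. (dl N i x - ?m (lbar N i x))^2)"
      proof (rule int_bdd_M[where C=3])
        fix x show "\<bar>(dl N i x - ?m (lbar N i x))^2\<bar> \<le> 3" by (rule vb[OF lbar_bd dl_bd[OF N0]])
      qed auto
      fix B :: "real set" assume B: "B \<in> sets borel"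
      show "(\<integral>x. indicator B (lbar N i x) * dl N i x \<partial>node_pos N) = (\<integral>x. indicator B (lbar N i x) * ?m (lbar N i x) \<partial>node_pos N)"
        by (rule h1M[OF N4 i B])
      show "(\<integral>x. indicator B (lbar N i x) * (dl N i x - ?m (lbar N i x))^2 \<partial>node_pos N) = ?v * (\<integral>x. indicator B (lbar N i x) \<partial>node_pos N)"
        by (rule h2M[OF N4 i B])
    qed auto
  qed
  let ?w = "(real N - 1) / (12 * (real N)\<^sup>2)"
  have vw: "?v = ?w" by (simp add: field_simps)
  define A where "A = (\<lambda>(x::nat\<Rightarrow>real, I::nat). lbar N I x)"
  define X where "X = (\<lambda>(x::nat\<Rightarrow>real, I::nat). dl N I x)"
  have cp: "\<And>\<Phi>. (\<lambda>w. \<Phi> (A w) (X w)) = (\<lambda>(x,I). \<Phi> (lbar N I x) (dl N I x))"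
    by (auto simp: A_def X_def fun_eq_iff)
  have P3: "AE w in edge_space N. cond_var (edge_space N) (vimage_algebra (space (edge_space N)) A borel) X w = ?w"
  proof (rule cond_var_const[where m="?m"])
    show "prob_space (edge_space N)" by (rule prob_E[OF N0])
    show "A \<in> borel_measurable (edge_space N)"
      using edge_gen(1)[OF N0, where \<Phi>="\<lambda>a b. a" and C=1] cp[of "\<lambda>a b. a"] by simp
    show "X \<in> borel_measurable (edge_space N)"
      using edge_gen(1)[OF N0, where \<Phi>="\<lambda>a b. b" and C=1] cp[of "\<lambda>a b. b"] by simp
    show "?m \<in> borel_measurable borel" by simp
    show "integrable (edge_space N) X"
      using edge_gen(2)[OF N0, where \<Phi>="\<lambda>a b. b" and C=1] cp[of "\<lambda>a b. b"] by simp
    show "integrable (edge_space N) (\<lambda>w. ?m (A w))"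
    proof -
      have "integrable (edge_space N) (\<lambda>(x, I). ?m (lbar N I x))"
      proof (rule edge_gen(2)[OF N0, where \<Phi>="\<lambda>a b. ?m a" and C=1])
        fix a b :: real assume "\<bar>a\<bar> \<le> 1/2"
        thus "\<bar>?m a\<bar> \<le> 1" using mfun_bd[OF N0, of a] by linarith
      qed simp
      thus ?thesis using cp[of "\<lambda>a b. ?m a"] by simp
    qed
    show "integrable (edge_space N) (\<lambda>w. (X w - ?m (A w))^2)"
    proof -
      have "integrable (edge_space N) (\<lambda>(x, I). (dl N I x - ?m (lbar N I x))^2)"
      proof (rule edge_gen(2)[OF N0, where \<Phi>="\<lambda>a b. (b - ?m a)^2" and C=3])
        fix a b :: real assume "\<bar>a\<bar> \<le> 1/2" "\<bar>b\<bar> \<le> 1"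
        thus "\<bar>(b - ?m a)^2\<bar> \<le> 3" by (rule vb)
      qed simp
      thus ?thesis using cp[of "\<lambda>a b. (b - ?m a)^2"] by simp
    qed
    fix B :: "real set" assume B[measurable]: "B \<in> sets borel"
    have e1: "(\<integral>w. indicator B (A w) * X w \<partial>edge_space N) = (\<Sum>I<N. \<integral>x. indicator B (lbar N I x) * dl N I x \<partial>node_pos N) / real N"
    proof -
      have "integral\<^sup>L (edge_space N) (\<lambda>(x, I). indicator B (lbar N I x) * dl N I x) = (\<Sum>I<N. \<integral>x. indicator B (lbar N I x) * dl N I x \<partial>node_pos N) / real N"
        by (rule edge_gen(3)[OF N0, where \<Phi>="\<lambda>a b. indicator B a * b" and C=1]) (auto simp: indicator_def)
      thus ?thesis using cp[of "\<lambda>a b. indicator B a * b"] by simp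
    qed
    have e2: "(\<integral>w. indicator B (A w) * ?m (A w) \<partial>edge_space N) = (\<Sum>I<N. \<integral>x. indicator B (lbar N I x) * ?m (lbar N I x) \<partial>node_pos N) / real N"
    proof -
      have "integral\<^sup>L (edge_space N) (\<lambda>(x, I). indicator B (lbar N I x) * ?m (lbar N I x)) = (\<Sum>I<N. \<integral>x. indicator B (lbar N I x) * ?m (lbar N I x) \<partial>node_pos N) / real N"
      proof (rule edge_gen(3)[OF N0, where \<Phi>="\<lambda>a b. indicator B a * ?m a" and C=1])
        fix a b :: real assume "\<bar>a\<bar> \<le> 1/2"
        thus "\<bar>indicator B a * ?m a\<bar> \<le> 1" using mfun_bd[OF N0, of a] by (auto simp: indicator_def)
      qed simp
      thus ?thesis using cp[of "\<lambda>a b. indicator B a * ?m a"] by simp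
    qed
    show "(\<integral>w. indicator B (A w) * X w \<partial>edge_space N) = (\<integral>w. indicator B (A w) * ?m (A w) \<partial>edge_space N)"
      unfolding e1 e2 using h1M[OF N4 _ B] by simp
    have e3: "(\<integral>w. indicator B (A w) * (X w - ?m (A w))^2 \<partial>edge_space N) = (\<Sum>I<N. \<integral>x. indicator B (lbar N I x) * (dl N I x - ?m (lbar N I x))^2 \<partial>node_pos N) / real N"
    proof -
      have "integral\<^sup>L (edge_space N) (\<lambda>(x, I). indicator B (lbar N I x) * (dl N I x - ?m (lbar N I x))^2) = (\<Sum>I<N. \<integral>x. indicator B (lbar N I x) * (dl N I x - ?m (lbar N I x))^2 \<partial>node_pos N) / real N"
      proof (rule edge_gen(3)[OF N0, where \<Phi>="\<lambda>a b. indicator B a * (b - ?m a)^2" and C=3])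
        fix a b :: real assume "\<bar>a\<bar> \<le> 1/2" "\<bar>b\<bar> \<le> 1"
        thus "\<bar>indicator B a * (b - ?m a)^2\<bar> \<le> 3" using vb[of a b] by (auto simp: indicator_def)
      qed simp
      thus ?thesis using cp[of "\<lambda>a b. indicator B a * (b - ?m a)^2"] by simp
    qed
    have e4: "(\<integral>w. indicator B (A w) \<partial>edge_space N) = (\<Sum>I<N. \<integral>x. indicator B (lbar N I x) \<partial>node_pos N) / real N"
    proof -
      have "integral\<^sup>L (edge_space N) (\<lambda>(x, I). indicator B (lbar N I x)) = (\<Sum>I<N. \<integral>x. indicator B (lbar N I x) \<partial>node_pos N) / real N"
        by (rule edge_gen(3)[OF N0, where \<Phi>="\<lambda>a b. indicator B a" and C=1]) (auto simp: indicator_def)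
      thus ?thesis using cp[of "\<lambda>a b. indicator B a :: real"] by simp
    qed
    show "(\<integral>w. indicator B (A w) * (X w - ?m (A w))^2 \<partial>edge_space N) = ?w * (\<integral>w. indicator B (A w) \<partial>edge_space N)"
    proof -
      have "(\<Sum>I<N. \<integral>x. indicator B (lbar N I x) * (dl N I x - ?m (lbar N I x))^2 \<partial>node_pos N)
          = (\<Sum>I<N. ?v * (\<integral>x. indicator B (lbar N I x) \<partial>node_pos N))"
        by (intro sum.cong refl) (rule h2M[OF N4 _ B], simp)
      also have "\<dots> = ?w * (\<Sum>I<N. \<integral>x. indicator B (lbar N I x) \<partial>node_pos N)"
        unfolding vw by (rule sum_distrib_left[symmetric])
      finally show ?thesis unfolding e3 e4 by simp
    qed
  qed
  have P4: "(\<integral>w. cond_var (edge_space N) (vimage_algebra (space (edge_space N)) A borel) X w \<partial>edge_space N) = ?w"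
  proof -
    have "(\<integral>w. cond_var (edge_space N) (vimage_algebra (space (edge_space N)) A borel) X w \<partial>edge_space N) = (\<integral>w. ?w \<partial>edge_space N)"
      by (rule integral_cong_AE) (use P3 in \<open>auto simp: cond_var_def\<close>)
    also have "\<dots> = ?w" by (simp add: E.prob_space)
    finally show ?thesis .
  qed
  show ?thesis using P1 P2 P3 P4 unfolding A_def X_def by blast
qed

end
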